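(* For all integers $n$ and $d$ with $3\leq d<\left\lceil\frac{n}{2}\right\rceil$, $$t(n,d)\leq n-2+\left\lceil\frac{n}{d-1}\right\rceil.$$
   Context: All graphs are finite, simple and undirected. In an edge-colored graph (adjacent edges may receive the same color), a path is a rainbow path if no two of its edges have the same color. A graph $G$ is $d$-rainbow connected if there is an edge-coloring of $G$ using $d$ colors such that every two distinct vertices of $G$ are joined by a rainbow path. For positive integers $n$ and $d$, $t(n,d)$ denotes the minimum number of edges of a $d$-rainbow connected graph on $n$ vertices. *)

theory Defs
  imports Complex_Main
begin

definition simple_graph :: "'a set \<Rightarrow> 'a set set \<Rightarrow> bool" where
  "simple_graph V E \<longleftrightarrow> finite V \<and> (\<forall>e\<in>E. e \<subseteq> V \<and> card e = 2)"

definition is_path :: "'a set set \<Rightarrow> 'a list \<Rightarrow> 'a \<Rightarrow> 'a \<Rightarrow> bool" where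
  "is_path E p u v \<longleftrightarrow> p \<noteq> [] \<and> hd p = u \<and> last p = v \<and> distinct p \<and>
     (\<forall>i. Suc i < length p \<longrightarrow> {p ! i, p ! Suc i} \<in> E)"

definition path_edges :: "'a list \<Rightarrow> 'a set list" where
  "path_edges p = map (\<lambda>i. {p ! i, p ! Suc i}) [0..<length p - 1]"

definition rainbow_path :: "'a set set \<Rightarrow> ('a set \<Rightarrow> 'c) \<Rightarrow> 'a list \<Rightarrow> 'a \<Rightarrow> 'a \<Rightarrow> bool" where
  "rainbow_path E c p u v \<longleftrightarrow> is_path E p u v \<and> distinct (map c (path_edges p))"

definition rainbow_connected :: "nat \<Rightarrow> 'a set \<Rightarrow> 'a set set \<Rightarrow> bool" where
  "rainbow_connected d V E \<longleftrightarrow>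
     (\<exists>c :: 'a set \<Rightarrow> nat. (\<forall>e\<in>E. c e < d) \<and>
        (\<forall>u\<in>V. \<forall>v\<in>V. u \<noteq> v \<longrightarrow> (\<exists>p. rainbow_path E c p u v)))"

(* t(n,d): minimum number of edges of a d-rainbow connected graph on n vertices
   (vertex set taken to be {0..<n}, which is no loss of generality). *)
definition t :: "nat \<Rightarrow> nat \<Rightarrow> nat" where
  "t n d = (LEAST m. \<exists>E. simple_graph {0..<n} E \<and> rainbow_connected d {0..<n} E \<and> card E = m)"

end

theory Submission
  imports Defs
begin


definition good :: "'a set set \<Rightarrow> ('a set \<Rightarrow> 'c) \<Rightarrow> (nat \<Rightarrow> 'a) \<Rightarrow> nat \<Rightarrow> 'a \<Rightarrow> 'a \<Rightarrow> bool" where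
  "good E c g m u v \<longleftrightarrow> g 0 = u \<and> g m = v \<and> inj_on g {..m} \<and> (\<forall>i<m. {g i, g (Suc i)} \<in> E)
     \<and> inj_on (\<lambda>i. c {g i, g (Suc i)}) {..<m}"

lemma good_rainbow:
  assumes "good E c g m u v"
  shows "rainbow_path E c (map g [0..<Suc m]) u v"
proof -
  let ?p = "map g [0..<Suc m]"
  have nth: "\<And>i. i < Suc m \<Longrightarrow> ?p ! i = g i"
    by (metis add_0 diff_zero length_upt nth_map nth_upt)
  have pe: "path_edges ?p = map (\<lambda>i. {g i, g (Suc i)}) [0..<m]"
    unfolding path_edges_def by (auto simp: nth simp del: upt_Suc)
  have "distinct ?p" using assms unfolding good_def
    by (simp add: distinct_map atLeast0LessThan lessThan_Suc_atMost del: upt_Suc)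
  moreover have "hd ?p = g 0" by (simp add: hd_map del: upt_Suc)
  moreover have "last ?p = g m" by simp
  moreover have "\<forall>i. Suc i < length ?p \<longrightarrow> {?p ! i, ?p ! Suc i} \<in> E"
    using assms nth unfolding good_def by (auto simp del: upt_Suc)
  moreover have "distinct (map c (path_edges ?p))"
    using assms unfolding pe good_def
    by (simp add: distinct_map atLeast0LessThan comp_def)
  ultimately show ?thesis using assms unfolding rainbow_path_def is_path_def good_def by auto
qed

lemma good_rev:
  assumes "good E c g m u v"
  shows "good E c (\<lambda>i. g (m - i)) m v u"
    and "(\<lambda>i. g (m - i)) ` {..m} = g ` {..m}"
    and "(\<lambda>i. c {g (m - i), g (m - Suc i)}) ` {..<m} = (\<lambda>i. c {g i, g (Suc i)}) ` {..<m}"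
proof -
  have im1: "(\<lambda>i. m - i) ` {..m} = {..m}"
  proof
    show "(\<lambda>i. m - i) ` {..m} \<subseteq> {..m}" by auto
    show "{..m} \<subseteq> (\<lambda>i. m - i) ` {..m}"
    proof
      fix x assume "x \<in> {..m}"
      then have "x = m - (m - x)" "m - x \<in> {..m}" by auto
      then show "x \<in> (\<lambda>i. m - i) ` {..m}" by (rule image_eqI)
    qed
  qed
  have im2: "(\<lambda>i. m - Suc i) ` {..<m} = {..<m}"
  proof
    show "(\<lambda>i. m - Suc i) ` {..<m} \<subseteq> {..<m}" by auto
    show "{..<m} \<subseteq> (\<lambda>i. m - Suc i) ` {..<m}"
    proof
      fix x assume "x \<in> {..<m}"
      then have "x = m - Suc (m - Suc x)" "m - Suc x \<in> {..<m}" by auto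
      then show "x \<in> (\<lambda>i. m - Suc i) ` {..<m}" by (rule image_eqI)
    qed
  qed
  have eq: "\<And>i. i < m \<Longrightarrow> {g (m - i), g (m - Suc i)} = {g (m - Suc i), g (Suc (m - Suc i))}"
    by (simp add: Suc_diff_Suc insert_commute)
  have "(\<lambda>i. g (m - i)) ` {..m} = g ` ((\<lambda>i. m - i) ` {..m})" by (simp add: image_image)
  then show "(\<lambda>i. g (m - i)) ` {..m} = g ` {..m}" using im1 by simp
  have "(\<lambda>i. c {g (m - i), g (m - Suc i)}) ` {..<m} = (\<lambda>i. c {g (m - Suc i), g (Suc (m - Suc i))}) ` {..<m}"
    using eq by (intro image_cong) auto
  also have "\<dots> = (\<lambda>i. c {g i, g (Suc i)}) ` ((\<lambda>i. m - Suc i) ` {..<m})" by (simp add: image_image)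
  finally show "(\<lambda>i. c {g (m - i), g (m - Suc i)}) ` {..<m} = (\<lambda>i. c {g i, g (Suc i)}) ` {..<m}"
    using im2 by simp
  have inj1: "inj_on (\<lambda>i. m - i) {..m}" by (auto simp: inj_on_def)
  have inj2: "inj_on (\<lambda>i. m - Suc i) {..<m}" by (auto simp: inj_on_def)
  show "good E c (\<lambda>i. g (m - i)) m v u"
    unfolding good_def
  proof (intro conjI)
    show "g (m - 0) = v" using assms by (simp add: good_def)
    show "g (m - m) = u" using assms by (simp add: good_def)
    show "inj_on (\<lambda>i. g (m - i)) {..m}"
      using comp_inj_on[OF inj1, of g] im1 assms by (simp add: good_def comp_def)
    show "\<forall>i<m. {g (m - i), g (m - Suc i)} \<in> E"
    proof (intro allI impI)
      fix i assume i: "i < m"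
      then have "m - Suc i < m" by auto
      then have "{g (m - Suc i), g (Suc (m - Suc i))} \<in> E" using assms by (simp add: good_def)
      then show "{g (m - i), g (m - Suc i)} \<in> E" using eq[OF i] by simp
    qed
    have "inj_on (\<lambda>i. c {g (m - Suc i), g (Suc (m - Suc i))}) {..<m}"
      using comp_inj_on[OF inj2, of "\<lambda>i. c {g i, g (Suc i)}"] im2 assms by (simp add: good_def comp_def)
    then show "inj_on (\<lambda>i. c {g (m - i), g (m - Suc i)}) {..<m}"
      by (rule inj_on_cong[THEN iffD1, rotated]) (simp add: eq)
  qed
qed

lemma good_concat:
  assumes g1: "good E c g1 m1 u h" and g2: "good E c g2 m2 h v"
    and V: "g1 ` {..m1} \<inter> g2 ` {..m2} \<subseteq> {h}"
    and C: "(\<lambda>i. c {g1 i, g1 (Suc i)}) ` {..<m1} \<inter> (\<lambda>i. c {g2 i, g2 (Suc i)}) ` {..<m2} = {}"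
  shows "good E c (\<lambda>i. if i \<le> m1 then g1 i else g2 (i - m1)) (m1 + m2) u v"
proof -
  let ?g = "\<lambda>i. if i \<le> m1 then g1 i else g2 (i - m1)"
  have a: "g1 0 = u" "g1 m1 = h" "inj_on g1 {..m1}" "\<forall>i<m1. {g1 i, g1 (Suc i)} \<in> E"
     "inj_on (\<lambda>i. c {g1 i, g1 (Suc i)}) {..<m1}" using g1 by (auto simp: good_def)
  have b: "g2 0 = h" "g2 m2 = v" "inj_on g2 {..m2}" "\<forall>i<m2. {g2 i, g2 (Suc i)} \<in> E"
     "inj_on (\<lambda>i. c {g2 i, g2 (Suc i)}) {..<m2}" using g2 by (auto simp: good_def)
  have gm: "\<And>i. m1 \<le> i \<Longrightarrow> ?g i = g2 (i - m1)" using a(2) b(1) by auto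
  have edge: "\<And>i. i < m1 + m2 \<Longrightarrow> {?g i, ?g (Suc i)} = (if i < m1 then {g1 i, g1 (Suc i)} else {g2 (i - m1), g2 (Suc (i - m1))})"
  proof -
    fix i assume "i < m1 + m2"
    show "{?g i, ?g (Suc i)} = (if i < m1 then {g1 i, g1 (Suc i)} else {g2 (i - m1), g2 (Suc (i - m1))})"
    proof (cases "i < m1")
      case True then show ?thesis by auto
    next
      case False
      then have "?g i = g2 (i - m1)" "?g (Suc i) = g2 (Suc (i - m1))" using gm by (auto simp: Suc_diff_le)
      then show ?thesis using False by simp
    qed
  qed
  show ?thesis unfolding good_def
  proof (intro conjI)
    show "?g 0 = u" using a by simp
    show "?g (m1 + m2) = v" using gm[of "m1+m2"] b by simp
    show "inj_on ?g {..m1 + m2}"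
    proof (rule inj_onI)
      fix i j assume i: "i \<in> {..m1 + m2}" and j: "j \<in> {..m1 + m2}" and e: "?g i = ?g j"
      have cross: "\<And>i j. i \<le> m1 \<Longrightarrow> m1 < j \<Longrightarrow> j \<le> m1 + m2 \<Longrightarrow> g1 i \<noteq> g2 (j - m1)"
      proof
        fix i j assume h: "i \<le> m1" "m1 < j" "j \<le> m1 + m2" "g1 i = g2 (j - m1)"
        then have "g1 i \<in> {h}" using V by force
        then have e1: "g1 i = g1 m1" and e2: "g2 (j - m1) = g2 0" using a b h by auto
        have "i = m1" by (rule inj_onD[OF a(3) e1]) (use h in auto)
        moreover have "j - m1 = 0" by (rule inj_onD[OF b(3) e2]) (use h in auto)
        ultimately show False using h by simp
      qed
      show "i = j"
      proof (cases "i \<le> m1"; cases "j \<le> m1")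
        assume h: "i \<le> m1" "j \<le> m1"
        then have "g1 i = g1 j" using e by simp
        then show ?thesis by (rule inj_onD[OF a(3)]) (use h in auto)
      next
        assume "i \<le> m1" "\<not> j \<le> m1" then show ?thesis using e cross j by auto
      next
        assume h: "\<not> i \<le> m1" "j \<le> m1"
        then have "g1 j = g2 (i - m1)" using e by simp
        moreover have "g1 j \<noteq> g2 (i - m1)" using cross[of j i] h i by auto
        ultimately show ?thesis by simp
      next
        assume h: "\<not> i \<le> m1" "\<not> j \<le> m1"
        then have "g2 (i - m1) = g2 (j - m1)" using e by simp
        then have "i - m1 = j - m1" by (rule inj_onD[OF b(3)]) (use h i j in auto)
        then show ?thesis using h by simp
      qed
    qed
    show "\<forall>i<m1 + m2. {?g i, ?g (Suc i)} \<in> E"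
    proof (intro allI impI)
      fix i assume "i < m1 + m2"
      then show "{?g i, ?g (Suc i)} \<in> E" using edge[of i] a(4) b(4) by auto
    qed
    show "inj_on (\<lambda>i. c {?g i, ?g (Suc i)}) {..<m1 + m2}"
    proof (rule inj_onI)
      fix i j assume i: "i \<in> {..<m1 + m2}" and j: "j \<in> {..<m1 + m2}"
        and e: "c {?g i, ?g (Suc i)} = c {?g j, ?g (Suc j)}"
      have cross: "\<And>i j. i < m1 \<Longrightarrow> m1 \<le> j \<Longrightarrow> j < m1 + m2 \<Longrightarrow>
           c {g1 i, g1 (Suc i)} \<noteq> c {g2 (j - m1), g2 (Suc (j - m1))}"
        using C by (auto simp: disjoint_iff)
      show "i = j"
      proof (cases "i < m1"; cases "j < m1")
        assume h: "i < m1" "j < m1"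
        then have "c {g1 i, g1 (Suc i)} = c {g1 j, g1 (Suc j)}" using e edge[of i] edge[of j] i j by auto
        then show ?thesis by (rule inj_onD[OF a(5)]) (use h in auto)
      next
        assume "i < m1" "\<not> j < m1" then show ?thesis using e edge[of i] edge[of j] cross[of i j] i j by auto
      next
        assume "\<not> i < m1" "j < m1" then show ?thesis using e edge[of i] edge[of j] cross[of j i] i j by auto
      next
        assume h: "\<not> i < m1" "\<not> j < m1"
        then have "c {g2 (i - m1), g2 (Suc (i - m1))} = c {g2 (j - m1), g2 (Suc (j - m1))}"
          using e edge[of i] edge[of j] i j by auto
        then have "i - m1 = j - m1" by (rule inj_onD[OF b(5)]) (use h i j in auto)
        then show ?thesis using h by simp
      qed
    qed
  qed
qed



definition vv :: "nat \<Rightarrow> nat \<Rightarrow> nat \<Rightarrow> nat" where "vv D c i = D * c + i + 1"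
definition ww :: "nat \<Rightarrow> nat \<Rightarrow> nat \<Rightarrow> nat" where "ww D r j = r * D + 1 + j"
definition Eg :: "nat \<Rightarrow> nat \<Rightarrow> nat \<Rightarrow> nat set set" where
  "Eg D r s = (\<lambda>(c,i). {vv D c i, vv D c (Suc i)}) ` ({..<r} \<times> {..<D-1})
     \<union> (\<lambda>c. {0, vv D c 0}) ` {..<r} \<union> (\<lambda>c. {0, vv D c (D-1)}) ` {..<r}
     \<union> (\<lambda>j. {0, ww D r j}) ` {..<s}"
definition hcol :: "nat \<Rightarrow> nat \<Rightarrow> nat \<Rightarrow> nat" where
  "hcol D r m = (if m > r * D then m - r * D - 1 else if (m - 1) mod D = 0 then 0 else D)"
definition col :: "nat \<Rightarrow> nat \<Rightarrow> nat set \<Rightarrow> nat" where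
  "col D r e = (if 0 \<in> e then hcol D r (Max e) else Suc ((Min e - 1) mod D))"

lemma subV: "A \<subseteq> insert 0 X \<Longrightarrow> B \<subseteq> insert 0 Y \<Longrightarrow> X \<inter> Y = {} \<Longrightarrow> A \<inter> B \<subseteq> {0::nat}"
  by blast
lemma subC: "A \<subseteq> P \<Longrightarrow> B \<subseteq> Q \<Longrightarrow> P \<inter> Q = {} \<Longrightarrow> A \<inter> B = {}"
  by blast

lemma join:
  assumes g1: "good E c g1 m1 u h" and g2: "good E c g2 m2 v h"
    and V: "g1 ` {..m1} \<inter> g2 ` {..m2} \<subseteq> {h}"
    and C: "(\<lambda>i. c {g1 i, g1 (Suc i)}) ` {..<m1} \<inter> (\<lambda>i. c {g2 i, g2 (Suc i)}) ` {..<m2} = {}"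
  shows "\<exists>g m. good E c g m u v"
proof -
  note R = good_rev[OF g2]
  have "good E c (\<lambda>i. if i \<le> m1 then g1 i else (\<lambda>i. g2 (m2 - i)) (i - m1)) (m1 + m2) u v"
    by (rule good_concat[OF g1 R(1)]) (use V C R(2) R(3) in auto)
  then show ?thesis by blast
qed

context
  fixes D r s :: nat
  assumes D2: "2 \<le> D" and sD: "s < D"
begin

lemma vv_inj: "i < D \<Longrightarrow> i' < D \<Longrightarrow> vv D c i = vv D c' i' \<longleftrightarrow> c = c' \<and> i = i'"
proof
  assume h: "i < D" "i' < D" "vv D c i = vv D c' i'"
  then have e: "D * c + i = D * c' + i'" by (simp add: vv_def)
  have "(D * c + i) div D = c" "(D * c' + i') div D = c'" using h D2 by auto
  moreover have "(D * c + i) mod D = i" "(D * c' + i') mod D = i'" using h D2 by auto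
  ultimately show "c = c' \<and> i = i'" using e by metis
qed simp

lemma vv_ne0[simp]: "vv D c i \<noteq> 0" by (simp add: vv_def)
lemma ww_ne0[simp]: "ww D r j \<noteq> 0" by (simp add: ww_def)
lemma vv_le: "c < r \<Longrightarrow> i < D \<Longrightarrow> vv D c i \<le> r * D"
proof -
  assume "c < r" "i < D"
  then have "D * c + D \<le> D * r" by (metis Suc_leI mult_Suc_right mult_le_mono2 add.commute)
  then show ?thesis using \<open>i < D\<close> by (simp add: vv_def mult.commute)
qed
lemma vv_ne_ww: "c < r \<Longrightarrow> i < D \<Longrightarrow> vv D c i \<noteq> ww D r j"
  using vv_le[of c i] by (auto simp: ww_def)
lemma vv_mod: "i < D \<Longrightarrow> (vv D c i - 1) mod D = i" by (simp add: vv_def)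

lemma col_chain: "Suc i < D \<Longrightarrow> col D r {vv D c i, vv D c (Suc i)} = Suc i"
proof -
  assume h: "Suc i < D"
  have "Min {vv D c i, vv D c (Suc i)} = vv D c i" by (simp add: vv_def)
  then show ?thesis using h vv_mod[of i c] by (simp add: col_def)
qed

lemma col_hub: "c < r \<Longrightarrow> i < D \<Longrightarrow> col D r {0, vv D c i} = (if i = 0 then 0 else D)"
proof -
  assume h: "c < r" "i < D"
  have "Max {0, vv D c i} = vv D c i" by simp
  then show ?thesis using h vv_mod[of i c] vv_le[of c i] by (simp add: col_def hcol_def)
qed

lemma col_pend: "col D r {0, ww D r j} = j"
  by (simp add: col_def hcol_def ww_def)

lemma E_chain: "c < r \<Longrightarrow> Suc i < D \<Longrightarrow> {vv D c i, vv D c (Suc i)} \<in> Eg D r s"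
  unfolding Eg_def by (rule UnI1)+ (rule image_eqI[where x="(c,i)"], auto)
lemma E_hub0: "c < r \<Longrightarrow> {0, vv D c 0} \<in> Eg D r s"
  unfolding Eg_def by auto
lemma E_hubD: "c < r \<Longrightarrow> {0, vv D c (D-1)} \<in> Eg D r s"
  unfolding Eg_def by auto
lemma E_pend: "j < s \<Longrightarrow> {0, ww D r j} \<in> Eg D r s"
  unfolding Eg_def by auto

definition dn where "dn c i = (\<lambda>k. if k \<le> i then vv D c (i - k) else 0)"
definition up where "up c i = (\<lambda>k. if k < D - i then vv D c (i + k) else 0)"
definition pd where "pd j = (\<lambda>k::nat. if k = 0 then ww D r j else (0::nat))"

lemma dn_step:
  assumes "c < r" "i < D" "k < Suc i"
  shows "{dn c i k, dn c i (Suc k)} \<in> Eg D r s \<and> col D r {dn c i k, dn c i (Suc k)} = i - k"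
proof (cases "k < i")
  case True
  have e: "{dn c i k, dn c i (Suc k)} = {vv D c (i - Suc k), vv D c (Suc (i - Suc k))}"
    using True by (simp add: dn_def Suc_diff_Suc insert_commute)
  have "Suc (i - Suc k) < D" using True assms by linarith
  then show ?thesis unfolding e using E_chain[OF assms(1)] col_chain True by auto
next
  case False
  then have "k = i" using assms by simp
  then have e: "{dn c i k, dn c i (Suc k)} = {0, vv D c 0}" by (simp add: dn_def insert_commute)
  show ?thesis unfolding e using E_hub0[OF assms(1)] col_hub[OF assms(1), of 0] D2 \<open>k = i\<close> by simp
qed

lemma dn_good:
  assumes "c < r" "i < D"
  shows "good (Eg D r s) (col D r) (dn c i) (Suc i) (vv D c i) 0"
    and "dn c i ` {..Suc i} \<subseteq> insert 0 (vv D c ` {..<D})"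
    and "(\<lambda>k. col D r {dn c i k, dn c i (Suc k)}) ` {..<Suc i} \<subseteq> {..i}"
proof -
  show "dn c i ` {..Suc i} \<subseteq> insert 0 (vv D c ` {..<D})"
    using assms by (auto simp: dn_def)
  show "(\<lambda>k. col D r {dn c i k, dn c i (Suc k)}) ` {..<Suc i} \<subseteq> {..i}"
    using dn_step[OF assms] by auto
  have inj: "inj_on (dn c i) {..Suc i}"
  proof (rule inj_onI)
    fix a b assume a: "a \<in> {..Suc i}" and b: "b \<in> {..Suc i}" and e: "dn c i a = dn c i b"
    show "a = b"
    proof (cases "a \<le> i"; cases "b \<le> i")
      assume h: "a \<le> i" "b \<le> i"
      then have "vv D c (i - a) = vv D c (i - b)" using e by (simp add: dn_def)
      then have "i - a = i - b" using vv_inj[of "i - a" "i - b" c c] assms by simp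
      then show ?thesis using h by simp
    qed (use a b e in \<open>auto simp: dn_def\<close>)
  qed
  have cinj: "inj_on (\<lambda>k. col D r {dn c i k, dn c i (Suc k)}) {..<Suc i}"
    by (rule inj_onI) (use dn_step[OF assms] in auto)
  show "good (Eg D r s) (col D r) (dn c i) (Suc i) (vv D c i) 0"
    unfolding good_def using inj cinj dn_step[OF assms] by (auto simp: dn_def)
qed

lemma up_step:
  assumes "c < r" "i < D" "k < D - i"
  shows "{up c i k, up c i (Suc k)} \<in> Eg D r s \<and> col D r {up c i k, up c i (Suc k)} = Suc (i + k)"
proof (cases "Suc (i + k) < D")
  case True
  have e: "{up c i k, up c i (Suc k)} = {vv D c (i + k), vv D c (Suc (i + k))}"
    using True by (simp add: up_def)
  then show ?thesis unfolding e using E_chain[OF assms(1) True] col_chain[OF True] by auto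
next
  case False
  then have k: "i + k = D - 1" using assms by simp
  have u1: "up c i k = vv D c (D - 1)" using k assms by (simp add: up_def)
  have u2: "up c i (Suc k) = 0" using k assms by (simp add: up_def)
  have e: "{up c i k, up c i (Suc k)} = {0, vv D c (D - 1)}" unfolding u1 u2 by (simp add: insert_commute)
  show ?thesis unfolding e using E_hubD[OF assms(1)] col_hub[OF assms(1), of "D - 1"] D2 k by simp
qed

lemma up_good:
  assumes "c < r" "i < D"
  shows "good (Eg D r s) (col D r) (up c i) (D - i) (vv D c i) 0"
    and "up c i ` {..D - i} \<subseteq> insert 0 (vv D c ` {..<D})"
    and "(\<lambda>k. col D r {up c i k, up c i (Suc k)}) ` {..<D - i} \<subseteq> {Suc i..}"
proof -
  show "up c i ` {..D - i} \<subseteq> insert 0 (vv D c ` {..<D})"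
    using assms by (auto simp: up_def)
  show "(\<lambda>k. col D r {up c i k, up c i (Suc k)}) ` {..<D - i} \<subseteq> {Suc i..}"
    using up_step[OF assms] by auto
  have inj: "inj_on (up c i) {..D - i}"
  proof (rule inj_onI)
    fix a b assume a: "a \<in> {..D - i}" and b: "b \<in> {..D - i}" and e: "up c i a = up c i b"
    show "a = b"
    proof (cases "a < D - i"; cases "b < D - i")
      assume h: "a < D - i" "b < D - i"
      then have "vv D c (i + a) = vv D c (i + b)" using e by (simp add: up_def)
      then have "i + a = i + b" using vv_inj[of "i + a" "i + b" c c] h by simp
      then show ?thesis by simp
    qed (use a b e in \<open>auto simp: up_def\<close>)
  qed
  have cinj: "inj_on (\<lambda>k. col D r {up c i k, up c i (Suc k)}) {..<D - i}"
    by (rule inj_onI) (use up_step[OF assms] in auto)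
  show "good (Eg D r s) (col D r) (up c i) (D - i) (vv D c i) 0"
    unfolding good_def using inj cinj up_step[OF assms] assms by (auto simp: up_def)
qed

lemma pd_good:
  assumes "j < s"
  shows "good (Eg D r s) (col D r) (pd j) 1 (ww D r j) 0"
    and "pd j ` {..1} \<subseteq> {0, ww D r j}"
    and "(\<lambda>k. col D r {pd j k, pd j (Suc k)}) ` {..<1} = {j}"
proof -
  show "pd j ` {..1} \<subseteq> {0, ww D r j}" by (auto simp: pd_def)
  have e: "{pd j 0, pd j (Suc 0)} = {0, ww D r j}" by (simp add: pd_def insert_commute)
  show "(\<lambda>k. col D r {pd j k, pd j (Suc k)}) ` {..<1} = {j}"
  proof -
    have "col D r {pd j 0, pd j (Suc 0)} = j" by (simp only: e col_pend)
    then show ?thesis by (simp add: lessThan_Suc)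
  qed
  have inj: "inj_on (pd j) {..1}"
  proof (rule inj_onI)
    fix a b :: nat assume "a \<in> {..1}" "b \<in> {..1}" "pd j a = pd j b"
    then show "a = b" by (cases a; cases b) (auto simp: pd_def)
  qed
  show "good (Eg D r s) (col D r) (pd j) 1 (ww D r j) 0"
    unfolding good_def using inj e E_pend[OF assms] by (auto simp: pd_def lessThan_Suc)
qed

lemma arc_good:
  assumes "c < r" "i < i'" "i' < D"
  shows "good (Eg D r s) (col D r) (\<lambda>k. vv D c (i + k)) (i' - i) (vv D c i) (vv D c i')"
proof -
  have st: "\<And>k. k < i' - i \<Longrightarrow> {vv D c (i + k), vv D c (i + Suc k)} \<in> Eg D r s \<and>
      col D r {vv D c (i + k), vv D c (i + Suc k)} = Suc (i + k)"
  proof -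
    fix k assume "k < i' - i"
    then have h: "Suc (i + k) < D" using assms by linarith
    show "?thesis k" using E_chain[OF assms(1) h] col_chain[OF h] by simp
  qed
  have inj: "inj_on (\<lambda>k. vv D c (i + k)) {..i' - i}"
    by (rule inj_onI) (use vv_inj assms in \<open>force\<close>)
  have cinj: "inj_on (\<lambda>k. col D r {vv D c (i + k), vv D c (i + Suc k)}) {..<i' - i}"
    by (rule inj_onI) (use st in auto)
  show ?thesis unfolding good_def using inj cinj st assms by auto
qed

lemma classify:
  assumes "u < r * D + s + 1"
  shows "u = 0 \<or> (\<exists>c i. c < r \<and> i < D \<and> u = vv D c i) \<or> (\<exists>j<s. u = ww D r j)"
proof (cases "u = 0")
  case False
  show ?thesis
  proof (cases "u \<le> r * D")
    case True
    define c where "c = (u - 1) div D"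
    define i where "i = (u - 1) mod D"
    have "u - 1 < r * D" using True False by simp
    then have "c < r" unfolding c_def by (simp add: less_mult_imp_div_less)
    moreover have "i < D" using D2 unfolding i_def by simp
    moreover have "u = vv D c i" unfolding vv_def c_def i_def using False by simp
    ultimately show ?thesis by blast
  next
    case False
    then have "u - r * D - 1 < s" "u = ww D r (u - r * D - 1)" using assms by (auto simp: ww_def)
    then show ?thesis by blast
  qed
qed simp

lemma hubpath:
  assumes "u < r * D + s + 1" "u \<noteq> 0"
  shows "\<exists>g m. good (Eg D r s) (col D r) g m u 0"
  using classify[OF assms(1)] assms(2) dn_good(1) pd_good(1) by blast

lemma conn:
  assumes u: "u < r * D + s + 1" and v: "v < r * D + s + 1" and uv: "u \<noteq> v"
  shows "\<exists>g m. good (Eg D r s) (col D r) g m u v"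
proof -
  have wwinj: "\<And>j j'. ww D r j = ww D r j' \<longleftrightarrow> j = j'" by (simp add: ww_def)
  have VW: "\<And>c j. c < r \<Longrightarrow> vv D c ` {..<D} \<inter> {ww D r j} = {}"
    using vv_ne_ww by blast
  have VW': "\<And>c j. c < r \<Longrightarrow> {ww D r j} \<inter> vv D c ` {..<D} = {}"
    using VW by (simp add: Int_commute)
  have VV: "\<And>c c'. c \<noteq> c' \<Longrightarrow> vv D c ` {..<D} \<inter> vv D c' ` {..<D} = {}"
    by (auto simp: vv_inj)
  have CC1: "\<And>i i'::nat. i \<le> i' \<Longrightarrow> {..i} \<inter> {Suc i'..} = {}" by auto
  have CC2: "\<And>i i'::nat. i' < i \<Longrightarrow> {Suc i..} \<inter> {..i'} = {}" by auto
  have CJ1: "\<And>i j::nat. j \<le> i \<Longrightarrow> {Suc i..} \<inter> {j} = {}" "\<And>i j::nat. j \<le> i \<Longrightarrow> {j} \<inter> {Suc i..} = {}" by auto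
  have CJ2: "\<And>i j::nat. i < j \<Longrightarrow> {..i} \<inter> {j} = {}" "\<And>i j::nat. i < j \<Longrightarrow> {j} \<inter> {..i} = {}" by auto
  consider "u = 0" | "v = 0" | "u \<noteq> 0" "v \<noteq> 0" by blast
  then show ?thesis
  proof cases
    case 1
    then have "v \<noteq> 0" using uv by simp
    then obtain g m where "good (Eg D r s) (col D r) g m v 0" using hubpath v by blast
    from good_rev(1)[OF this] show ?thesis using 1 by blast
  next
    case 2
    then show ?thesis using hubpath u uv by blast
  next
    case 3
    note cu = classify[OF u] and cv = classify[OF v]
    show ?thesis
    proof (cases "\<exists>j<s. u = ww D r j")
      case True
      then obtain j where j: "j < s" "u = ww D r j" by blast
      note pj = pd_good[OF j(1)]
      show ?thesis
      proof (cases "\<exists>j<s. v = ww D r j")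
        case True
        then obtain j' where j': "j' < s" "v = ww D r j'" by blast
        have "j \<noteq> j'" using uv j j' by auto
        note pj' = pd_good[OF j'(1)]
        show ?thesis unfolding j j'
          by (rule join[OF pj(1) pj'(1)],
              rule subV[OF pj(2) pj'(2)], simp add: wwinj \<open>j \<noteq> j'\<close>,
              rule subC[OF equalityD1[OF pj(3)] equalityD1[OF pj'(3)]], simp add: \<open>j \<noteq> j'\<close>)
      next
        case False
        then obtain c i where ci: "c < r" "i < D" "v = vv D c i" using cv 3 by blast
        note ug = up_good[OF ci(1,2)] and dg = dn_good[OF ci(1,2)]
        show ?thesis
        proof (cases "j \<le> i")
          case True
          show ?thesis unfolding j ci
            by (rule join[OF pj(1) ug(1)], rule subV[OF pj(2) ug(2)], rule VW'[OF ci(1)],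
                rule subC[OF equalityD1[OF pj(3)] ug(3)], rule CJ1(2)[OF True])
        next
          case False
          then have "i < j" by simp
          show ?thesis unfolding j ci
            by (rule join[OF pj(1) dg(1)], rule subV[OF pj(2) dg(2)], rule VW'[OF ci(1)],
                rule subC[OF equalityD1[OF pj(3)] dg(3)], rule CJ2(2)[OF \<open>i < j\<close>])
        qed
      qed
    next
      case False
      then obtain c i where ci: "c < r" "i < D" "u = vv D c i" using cu 3 by blast
      note ug = up_good[OF ci(1,2)] and dg = dn_good[OF ci(1,2)]
      show ?thesis
      proof (cases "\<exists>j<s. v = ww D r j")
        case True
        then obtain j where j: "j < s" "v = ww D r j" by blast
        note pj = pd_good[OF j(1)]
        show ?thesis
        proof (cases "j \<le> i")
          case True
          show ?thesis unfolding j ci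
            by (rule join[OF ug(1) pj(1)], rule subV[OF ug(2) pj(2)], rule VW[OF ci(1)],
                rule subC[OF ug(3) equalityD1[OF pj(3)]], rule CJ1(1)[OF True])
        next
          case False
          then have "i < j" by simp
          show ?thesis unfolding j ci
            by (rule join[OF dg(1) pj(1)], rule subV[OF dg(2) pj(2)], rule VW[OF ci(1)],
                rule subC[OF dg(3) equalityD1[OF pj(3)]], rule CJ2(1)[OF \<open>i < j\<close>])
        qed
      next
        case False
        then obtain c' i' where ci': "c' < r" "i' < D" "v = vv D c' i'" using cv 3 by blast
        note ug' = up_good[OF ci'(1,2)] and dg' = dn_good[OF ci'(1,2)]
        show ?thesis
        proof (cases "c = c'")
          case True
          then have "i \<noteq> i'" using uv ci ci' by auto
          show ?thesis
          proof (cases "i < i'")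
            case True
            show ?thesis unfolding ci ci' \<open>c = c'\<close> using arc_good[OF ci'(1) True ci'(2)] by blast
          next
            case False
            then have "i' < i" using \<open>i \<noteq> i'\<close> by simp
            from good_rev(1)[OF arc_good[OF ci'(1) this ci(2)]]
            show ?thesis unfolding ci ci' \<open>c = c'\<close> by blast
          qed
        next
          case False
          note vvd = VV[OF False]
          show ?thesis
          proof (cases "i \<le> i'")
            case True
            show ?thesis unfolding ci ci'
              by (rule join[OF dg(1) ug'(1)], rule subV[OF dg(2) ug'(2)], rule vvd,
                  rule subC[OF dg(3) ug'(3)], rule CC1[OF True])
          next
            case False
            then have "i' < i" by simp
            show ?thesis unfolding ci ci'
              by (rule join[OF ug(1) dg'(1)], rule subV[OF ug(2) dg'(2)], rule vvd,
                  rule subC[OF ug(3) dg'(3)], rule CC2[OF \<open>i' < i\<close>])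
          qed
        qed
      qed
    qed
  qed
qed

lemma col_bound: "e \<in> Eg D r s \<Longrightarrow> col D r e < Suc D"
proof -
  assume "e \<in> Eg D r s"
  then consider (a) c i where "c < r" "i < D - 1" "e = {vv D c i, vv D c (Suc i)}"
    | (b) c where "c < r" "e = {0, vv D c 0}"
    | (c) c where "c < r" "e = {0, vv D c (D-1)}"
    | (d) j where "j < s" "e = {0, ww D r j}"
    unfolding Eg_def by blast
  then show ?thesis
  proof cases
    case a then show ?thesis using col_chain[of i c] by simp
  next
    case b then show ?thesis using col_hub[of c 0] D2 by simp
  next
    case c then show ?thesis using col_hub[of c "D-1"] D2 by simp
  next
    case d then show ?thesis using col_pend[of j] sD by simp
  qed
qed

lemma simple: "simple_graph {0..<r * D + s + 1} (Eg D r s)"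
  unfolding simple_graph_def
proof (rule conjI[OF finite_atLeastLessThan], rule ballI)
  fix e assume "e \<in> Eg D r s"
  then consider (a) c i where "c < r" "i < D - 1" "e = {vv D c i, vv D c (Suc i)}"
    | (b) c where "c < r" "e = {0, vv D c 0}"
    | (c) c where "c < r" "e = {0, vv D c (D-1)}"
    | (d) j where "j < s" "e = {0, ww D r j}"
    unfolding Eg_def by blast
  then show "e \<subseteq> {0..<r * D + s + 1} \<and> card e = 2"
  proof cases
    case a
    have "vv D c i \<le> r * D" "vv D c (Suc i) \<le> r * D" using vv_le a by auto
    then show ?thesis using a by (simp add: vv_def)
  next
    case b
    have "vv D c 0 \<le> r * D" using vv_le b D2 by auto
    then show ?thesis using b by simp
  next
    case c
    have "vv D c (D-1) \<le> r * D" using vv_le c D2 by auto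
    then show ?thesis using c by simp
  next
    case d then show ?thesis by (simp add: ww_def)
  qed
qed

lemma card_E: "card (Eg D r s) \<le> r * D + r + s"
proof -
  have c1: "card ((\<lambda>(c,i). {vv D c i, vv D c (Suc i)}) ` ({..<r} \<times> {..<D-1})) \<le> r * (D - 1)"
    using card_image_le[of "{..<r} \<times> {..<D-1}"] by (simp add: card_cartesian_product)
  have c2: "card ((\<lambda>c. {0, vv D c 0}) ` {..<r}) \<le> r"
    using card_image_le[of "{..<r}"] by simp
  have c3: "card ((\<lambda>c. {0, vv D c (D-1)}) ` {..<r}) \<le> r"
    using card_image_le[of "{..<r}"] by simp
  have c4: "card ((\<lambda>j. {0, ww D r j}) ` {..<s}) \<le> s"
    using card_image_le[of "{..<s}"] by simp
  have "card (Eg D r s) \<le> r * (D - 1) + r + r + s"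
  proof -
    let ?A = "(\<lambda>(c,i). {vv D c i, vv D c (Suc i)}) ` ({..<r} \<times> {..<D-1})"
    let ?B = "(\<lambda>c. {0, vv D c 0}) ` {..<r}"
    let ?C = "(\<lambda>c. {0, vv D c (D-1)}) ` {..<r}"
    let ?F = "(\<lambda>j. {0, ww D r j}) ` {..<s}"
    have "card (?A \<union> ?B \<union> ?C \<union> ?F) \<le> card (?A \<union> ?B \<union> ?C) + card ?F" by (rule card_Un_le)
    moreover have "card (?A \<union> ?B \<union> ?C) \<le> card (?A \<union> ?B) + card ?C" by (rule card_Un_le)
    moreover have "card (?A \<union> ?B) \<le> card ?A + card ?B" by (rule card_Un_le)
    ultimately show ?thesis unfolding Eg_def using c1 c2 c3 c4 by linarith
  qed
  also have "\<dots> = r * D + r + s" using D2 by (simp add: algebra_simps)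
  finally show ?thesis .
qed

lemma main:
  "simple_graph {0..<r * D + s + 1} (Eg D r s) \<and> rainbow_connected (Suc D) {0..<r * D + s + 1} (Eg D r s)
   \<and> card (Eg D r s) \<le> r * D + r + s"
proof -
  have "rainbow_connected (Suc D) {0..<r * D + s + 1} (Eg D r s)"
    unfolding rainbow_connected_def
  proof (intro exI[of _ "col D r"] conjI ballI impI)
    show "\<And>e. e \<in> Eg D r s \<Longrightarrow> col D r e < Suc D" by (rule col_bound)
    fix u v assume "u \<in> {0..<r * D + s + 1}" "v \<in> {0..<r * D + s + 1}" "u \<noteq> v"
    then have "u < r * D + s + 1" "v < r * D + s + 1" "u \<noteq> v" by auto
    from conn[OF this] obtain g m where "good (Eg D r s) (col D r) g m u v" by blast
    then have "rainbow_path (Eg D r s) (col D r) (map g [0..<Suc m]) u v" by (rule good_rainbow)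
    then show "\<exists>p. rainbow_path (Eg D r s) (col D r) p u v" by blast
  qed
  then show ?thesis using simple card_E by blast
qed

end

theorem proposition3:
  fixes n d :: nat
  assumes "3 \<le> d" and "int d < \<lceil>real n / 2\<rceil>"
  shows "real (t n d) \<le> real n - 2 + real_of_int \<lceil>real n / real (d - 1)\<rceil>"
proof -
  define D where "D = d - 1"
  define r where "r = (n - 1) div D"
  define s where "s = (n - 1) mod D"
  have D2: "2 \<le> D" using assms(1) unfolding D_def by simp
  have sD: "s < D" using D2 unfolding s_def by simp
  have n1: "n \<ge> 1"
  proof (rule ccontr)
    assume "\<not> n \<ge> 1"
    then have "n = 0" by simp
    then show False using assms(2) by simp
  qed
  have nN: "r * D + s + 1 = n" unfolding r_def s_def using n1 by simp
  have dD: "Suc D = d" unfolding D_def using assms(1) by simp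
  note M = main[OF D2 sD]
  have "t n d \<le> card (Eg D r s)"
    unfolding t_def
    by (rule Least_le, rule exI[of _ "Eg D r s"]) (use M nN dD in auto)
  also have "\<dots> \<le> r * D + r + s" using M by blast
  finally have tb: "real (t n d) \<le> real n - 1 + real r" using nN by linarith
  have "real r * real D < real n" using nN by (metis of_nat_less_iff of_nat_mult less_add_same_cancel1 add_Suc_right add.commute Suc_eq_plus1 le_add1 le_imp_less_Suc trans_less_add1 mult.commute less_Suc_eq_le le_add2)
  then have "real r < real n / real D" using D2 by (simp add: less_divide_eq)
  then have "int r < \<lceil>real n / real D\<rceil>" by (simp add: less_ceiling_iff)
  then have "real r + 1 \<le> real_of_int \<lceil>real n / real D\<rceil>" by linarith
  then show ?thesis using tb unfolding D_def by linarith
qed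

end
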